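(* Let $a,b,g,h>0$ and fix real numbers $x,y$. Consider all pairs $(\theta,\psi)\in\mathbb{R}^2$ such that, with $A=(a\,\mathrm{ch}\,\theta,a\,\mathrm{sh}\,\theta)$ and $B=(g+b\,\mathrm{ch}\,\psi,b\,\mathrm{sh}\,\psi)$, the vector $B-A$ is future-pointing spacelike with $\langle B-A,B-A\rangle=h^2$; for such a pair write $B-A=h(\mathrm{ch}\,\alpha,\mathrm{sh}\,\alpha)$ with $\alpha\in\mathbb{R}$ and define the coupler point $$X(\theta,\psi)=A+x(\mathrm{ch}\,\alpha,\mathrm{sh}\,\alpha)+y(\mathrm{sh}\,\alpha,\mathrm{ch}\,\alpha).$$ Then the coupler curve $\{X(\theta,\psi)\}$ is algebraic of degree six: there is a nonzero real polynomial $P(X,Y)$ of total degree $6$ vanishing at every coupler point.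
   Context: $\mathbb{R}^2$ carries the Lorentzian form $\langle u,v\rangle=u_1v_1-u_2v_2$; a vector $u$ is future-pointing spacelike if $u_1>|u_2|$. $\mathrm{ch},\mathrm{sh}$ are hyperbolic cosine and sine. This is a Minkowskian planar 4R linkage with fixed pivots $O=(0,0)$, $C=(g,0)$, input crank $OA$ of length $a$, output crank $CB$ of length $b$, coupler $AB$ of length $h$; $(x,y)$ are the coordinates of a point rigidly attached to the coupler in the moving Minkowskian frame located at $A$ with first axis along $AB$. *)

theory Defs
  imports Complex_Main
begin

definition lor :: "real \<times> real \<Rightarrow> real \<times> real \<Rightarrow> real" where
  "lor u v = fst u * fst v - snd u * snd v"

definition fut_spacelike :: "real \<times> real \<Rightarrow> bool" where
  "fut_spacelike u \<longleftrightarrow> fst u > \<bar>snd u\<bar>"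

text \<open>A bivariate real polynomial is represented by its coefficient function
  c i j (coefficient of X^i Y^j).\<close>
definition poly2_total_degree :: "(nat \<Rightarrow> nat \<Rightarrow> real) \<Rightarrow> nat \<Rightarrow> bool" where
  "poly2_total_degree c d \<longleftrightarrow>
     (\<forall>i j. d < i + j \<longrightarrow> c i j = 0) \<and> (\<exists>i j. i + j = d \<and> c i j \<noteq> 0)"

definition poly2_eval :: "nat \<Rightarrow> (nat \<Rightarrow> nat \<Rightarrow> real) \<Rightarrow> real \<Rightarrow> real \<Rightarrow> real" where
  "poly2_eval d c X Y = (\<Sum>i\<le>d. \<Sum>j\<le>d. c i j * X ^ i * Y ^ j)"

definition vsub :: "real \<times> real \<Rightarrow> real \<times> real \<Rightarrow> real \<times> real" where
  "vsub u v = (fst u - fst v, snd u - snd v)"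

definition pA :: "real \<Rightarrow> real \<Rightarrow> real \<times> real" where
  "pA a \<theta> = (a * cosh \<theta>, a * sinh \<theta>)"

definition pB :: "real \<Rightarrow> real \<Rightarrow> real \<Rightarrow> real \<times> real" where
  "pB g b \<psi> = (g + b * cosh \<psi>, b * sinh \<psi>)"

definition coupler_pt :: "real \<Rightarrow> real \<Rightarrow> real \<Rightarrow> real \<Rightarrow> real \<Rightarrow> real \<times> real" where
  "coupler_pt a \<theta> \<alpha> x y =
     (a * cosh \<theta> + x * cosh \<alpha> + y * sinh \<alpha>, a * sinh \<theta> + x * sinh \<alpha> + y * cosh \<alpha>)"

end

theory Submission
  imports Defs
begin

definition cc :: "real \<Rightarrow> real \<Rightarrow> real \<Rightarrow> real \<Rightarrow> real \<Rightarrow> real \<Rightarrow> nat \<Rightarrow> nat \<Rightarrow> real" where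
 "cc a b g h x y i j = (
  if i = 0 \<and> j = 0 then (4*g^2*y^6) + (-12*g^2*x^2*y^4) + (12*g^2*x^4*y^2) + (-4*g^2*x^6) + (8*g^2*h*x*y^4) + (-16*g^2*h*x^3*y^2) + (8*g^2*h*x^5) + (-4*g^2*h^2*y^4) + (8*g^2*h^2*x^2*y^2) + (-4*g^2*h^2*x^4) + (8*a^2*g^2*y^4) + (-16*a^2*g^2*x^2*y^2) + (8*a^2*g^2*x^4) + (16*a^2*g^2*h*x*y^2) + (-16*a^2*g^2*h*x^3) + (-8*a^2*g^2*h^2*y^2) + (8*a^2*g^2*h^2*x^2) + (4*a^4*g^2*y^2) + (-4*a^4*g^2*x^2) + (8*a^4*g^2*h*x) + (-4*a^4*g^2*h^2) else
  if i = 0 \<and> j = 1 then (-8*g*h*y^5) + (16*g*h*x^2*y^3) + (-8*g*h*x^4*y) + (-16*g*h^2*x*y^3) + (16*g*h^2*x^3*y) + (8*g*h^3*y^3) + (-8*g*h^3*x^2*y) + (8*g^3*h*y^3) + (-8*g^3*h*x^2*y) + (-8*b^2*g*h*y^3) + (8*b^2*g*h*x^2*y) + (-8*a^2*g*h*y^3) + (8*a^2*g*h*x^2*y) + (-16*a^2*g*h^2*x*y) + (8*a^2*g*h^3*y) + (8*a^2*g^3*h*y) + (-8*a^2*b^2*g*h*y) else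
  if i = 0 \<and> j = 2 then (4*h^2*y^4) + (-8*h^2*x^2*y^2) + (4*h^2*x^4) + (8*h^3*x*y^2) + (-8*h^3*x^3) + (-4*h^4*y^2) + (4*h^4*x^2) + (-8*g^2*y^4) + (16*g^2*x^2*y^2) + (-8*g^2*x^4) + (-8*g^2*h*x*y^2) + (8*g^2*h*x^3) + (-16*g^2*h^2*y^2) + (-4*g^4*y^2) + (4*g^4*x^2) + (-8*b^2*h*x*y^2) + (8*b^2*h*x^3) + (8*b^2*h^2*y^2) + (-8*b^2*h^2*x^2) + (8*b^2*g^2*y^2) + (-8*b^2*g^2*x^2) + (-4*b^4*y^2) + (4*b^4*x^2) + (8*a^2*h*x*y^2) + (-8*a^2*h*x^3) + (16*a^2*h^2*x^2) + (-8*a^2*h^3*x) + (8*a^2*g^2*h*x) + (-8*a^2*g^2*h^2) + (8*a^2*b^2*y^2) + (-8*a^2*b^2*x^2) + (8*a^2*b^2*h*x) + (-4*a^4*y^2) + (4*a^4*x^2) + (-8*a^4*h*x) + (4*a^4*h^2) else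
  if i = 0 \<and> j = 3 then (16*g*h*y^3) + (-16*g*h*x^2*y) + (16*g*h^2*x*y) + (8*g*h^3*y) + (8*g^3*h*y) + (-8*b^2*g*h*y) + (-8*a^2*g*h*y) else
  if i = 0 \<and> j = 4 then (-8*h^2*y^2) + (8*h^2*x^2) + (-8*h^3*x) + (4*g^2*y^2) + (-4*g^2*x^2) + (-4*g^2*h^2) + (8*b^2*h*x) + (-8*a^2*h*x) + (8*a^2*h^2) else
  if i = 0 \<and> j = 5 then (-8*g*h*y) else
  if i = 0 \<and> j = 6 then (4*h^2) else
  if i = 1 \<and> j = 0 then (8*g*h*x*y^4) + (-16*g*h*x^3*y^2) + (8*g*h*x^5) + (16*g*h^2*x^2*y^2) + (-16*g*h^2*x^4) + (-8*g*h^3*x*y^2) + (8*g*h^3*x^3) + (-8*g^3*y^4) + (16*g^3*x^2*y^2) + (-8*g^3*x^4) + (-8*g^3*h*x*y^2) + (8*g^3*h*x^3) + (8*b^2*g*y^4) + (-16*b^2*g*x^2*y^2) + (8*b^2*g*x^4) + (8*b^2*g*h*x*y^2) + (-8*b^2*g*h*x^3) + (-8*a^2*g*y^4) + (16*a^2*g*x^2*y^2) + (-8*a^2*g*x^4) + (-8*a^2*g*h*x*y^2) + (8*a^2*g*h*x^3) + (8*a^2*g*h^2*y^2) + (8*a^2*g*h^2*x^2) + (-8*a^2*g*h^3*x) + (-8*a^2*g^3*y^2) + (8*a^2*g^3*x^2) + (-8*a^2*g^3*h*x) + (8*a^2*b^2*g*y^2) + (-8*a^2*b^2*g*x^2) +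 (8*a^2*b^2*g*h*x) + (-8*a^4*g*y^2) + (8*a^4*g*x^2) + (-16*a^4*g*h*x) + (8*a^4*g*h^2) else
  if i = 1 \<and> j = 1 then (16*g^2*h*y^3) + (-16*g^2*h*x^2*y) + (32*g^2*h^2*x*y) + (-16*a^2*g^2*h*y) else
  if i = 1 \<and> j = 2 then (-16*g*h*x*y^2) + (16*g*h*x^3) + (-8*g*h^2*y^2) + (-8*g*h^2*x^2) + (-8*g*h^3*x) + (8*g^3*y^2) + (-8*g^3*x^2) + (-8*g^3*h*x) + (-8*b^2*g*y^2) + (8*b^2*g*x^2) + (8*b^2*g*h*x) + (8*a^2*g*y^2) + (-8*a^2*g*x^2) + (-8*a^2*g*h*x) + (16*a^2*g*h^2) else
  if i = 1 \<and> j = 3 then (-16*g^2*h*y) else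
  if i = 1 \<and> j = 4 then (8*g*h*x) + (8*g*h^2) else
  if i = 2 \<and> j = 0 then (-4*h^2*y^4) + (8*h^2*x^2*y^2) + (-4*h^2*x^4) + (-8*h^3*x*y^2) + (8*h^3*x^3) + (4*h^4*y^2) + (-4*h^4*x^2) + (8*g^2*y^4) + (-16*g^2*x^2*y^2) + (8*g^2*x^4) + (-8*g^2*h*x*y^2) + (8*g^2*h*x^3) + (-16*g^2*h^2*x^2) + (4*g^4*y^2) + (-4*g^4*x^2) + (8*b^2*h*x*y^2) + (-8*b^2*h*x^3) + (-8*b^2*h^2*y^2) + (8*b^2*h^2*x^2) + (-8*b^2*g^2*y^2) + (8*b^2*g^2*x^2) + (4*b^4*y^2) + (-4*b^4*x^2) + (-8*a^2*h*x*y^2) + (8*a^2*h*x^3) + (-16*a^2*h^2*x^2) + (8*a^2*h^3*x) + (16*a^2*g^2*y^2) + (-16*a^2*g^2*x^2) + (8*a^2*g^2*h*x) + (8*a^2*g^2*h^2) + (-8*a^2*b^2*y^2) + (8*a^2*b^2*x^2) + (-8*a^2*b^2*h*x) + (4*a^4*y^2) + (-4*a^4*x^2) + (8*a^4*h*x) + (-4*a^4*h^2) else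
  if i = 2 \<and> j = 1 then (-16*g*h*y^3) + (16*g*h*x^2*y) + (-16*g*h^2*x*y) + (-8*g*h^3*y) + (-8*g^3*h*y) + (8*b^2*g*h*y) + (8*a^2*g*h*y) else
  if i = 2 \<and> j = 2 then (16*h^2*y^2) + (-16*h^2*x^2) + (16*h^3*x) + (-8*g^2*y^2) + (8*g^2*x^2) + (16*g^2*h*x) + (8*g^2*h^2) + (-16*b^2*h*x) + (16*a^2*h*x) + (-16*a^2*h^2) else
  if i = 2 \<and> j = 3 then (16*g*h*y) else
  if i = 2 \<and> j = 4 then (-12*h^2) else
  if i = 3 \<and> j = 0 then (16*g*h*x*y^2) + (-16*g*h*x^3) + (8*g*h^2*y^2) + (8*g*h^2*x^2) + (8*g*h^3*x) + (-8*g^3*y^2) + (8*g^3*x^2) + (8*g^3*h*x) + (8*b^2*g*y^2) + (-8*b^2*g*x^2) + (-8*b^2*g*h*x) + (-8*a^2*g*y^2) + (8*a^2*g*x^2) + (8*a^2*g*h*x) + (-16*a^2*g*h^2) else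
  if i = 3 \<and> j = 1 then (16*g^2*h*y) else
  if i = 3 \<and> j = 2 then (-16*g*h*x) + (-16*g*h^2) else
  if i = 4 \<and> j = 0 then (-8*h^2*y^2) + (8*h^2*x^2) + (-8*h^3*x) + (4*g^2*y^2) + (-4*g^2*x^2) + (-16*g^2*h*x) + (-4*g^2*h^2) + (8*b^2*h*x) + (-8*a^2*h*x) + (8*a^2*h^2) else
  if i = 4 \<and> j = 1 then (-8*g*h*y) else
  if i = 4 \<and> j = 2 then (12*h^2) else
  if i = 5 \<and> j = 0 then (8*g*h*x) + (8*g*h^2) else
  if i = 6 \<and> j = 0 then (-4*h^2) else
  0)"

definition FF :: "real \<Rightarrow> real \<Rightarrow> real \<Rightarrow> real \<Rightarrow> real \<Rightarrow> real \<Rightarrow> real \<Rightarrow> real \<Rightarrow> real" where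
 "FF a b g h x y X Y = (let
    p1 = -2*x*X + 2*y*Y; q1 = 2*x*Y - 2*y*X; r1 = a^2 - (X^2 - Y^2) - x^2 + y^2;
    p2 = -2*(x-h)*(X-g) + 2*y*Y; q2 = 2*(x-h)*Y - 2*y*(X-g);
    r2 = b^2 - ((X-g)^2 - Y^2) - (x-h)^2 + y^2
   in (r1*q2-r2*q1)^2 - (p1*r2-p2*r1)^2 - (p1*q2-p2*q1)^2)"

lemma eval_eq: "poly2_eval 6 (cc a b g h x y) X Y = FF a b g h x y X Y"
  unfolding poly2_eval_def FF_def Let_def
  by (simp add: numeral_eq_Suc cc_def; algebra)

lemma key:
  fixes p1 q1 r1 p2 q2 r2 c s :: real
  assumes "p1*c+q1*s = r1" "p2*c+q2*s = r2" "c^2 - s^2 = 1"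
  shows "(r1*q2-r2*q1)^2 - (p1*r2-p2*r1)^2 - (p1*q2-p2*q1)^2 = 0"
proof -
  have e1: "r1*q2-r2*q1 = (p1*q2-p2*q1)*c" using assms(1,2) by (simp add: algebra_simps flip: assms(1,2))
  have e2: "p1*r2-p2*r1 = (p1*q2-p2*q1)*s" by (simp add: algebra_simps flip: assms(1,2))
  have "(r1*q2-r2*q1)^2 - (p1*r2-p2*r1)^2 - (p1*q2-p2*q1)^2 = (p1*q2-p2*q1)^2 * (c^2 - s^2 - 1)"
    unfolding e1 e2 by (simp add: algebra_simps power2_eq_square)
  then show ?thesis using assms(3) by simp
qed

theorem mainTheorem7:
  fixes a b g h x y :: real
  assumes "a > 0" "b > 0" "g > 0" "h > 0"
  shows "\<exists>c :: nat \<Rightarrow> nat \<Rightarrow> real. poly2_total_degree c 6 \<and>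
    (\<forall>\<theta> \<psi> \<alpha>.
       fut_spacelike (vsub (pB g b \<psi>) (pA a \<theta>)) \<and>
       lor (vsub (pB g b \<psi>) (pA a \<theta>)) (vsub (pB g b \<psi>) (pA a \<theta>)) = h ^ 2 \<and>
       vsub (pB g b \<psi>) (pA a \<theta>) = (h * cosh \<alpha>, h * sinh \<alpha>)
       \<longrightarrow> poly2_eval 6 c (fst (coupler_pt a \<theta> \<alpha> x y)) (snd (coupler_pt a \<theta> \<alpha> x y)) = 0)"
proof (intro exI[of _ "cc a b g h x y"] conjI allI impI)
  show "poly2_total_degree (cc a b g h x y) 6"
    unfolding poly2_total_degree_def
  proof (intro conjI allI impI)
    fix i j :: nat assume "6 < i + j"
    then show "cc a b g h x y i j = 0" unfolding cc_def by auto
  next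
    show "\<exists>i j. i + j = 6 \<and> cc a b g h x y i j \<noteq> 0"
      using assms(4) by (intro exI[of _ 6] exI[of _ 0]) (simp add: cc_def)
  qed
next
  fix \<theta> \<psi> \<alpha>
  assume H: "fut_spacelike (vsub (pB g b \<psi>) (pA a \<theta>)) \<and>
       lor (vsub (pB g b \<psi>) (pA a \<theta>)) (vsub (pB g b \<psi>) (pA a \<theta>)) = h ^ 2 \<and>
       vsub (pB g b \<psi>) (pA a \<theta>) = (h * cosh \<alpha>, h * sinh \<alpha>)"
  then have v1: "g + b * cosh \<psi> - a * cosh \<theta> = h * cosh \<alpha>"
    and v2: "b * sinh \<psi> - a * sinh \<theta> = h * sinh \<alpha>"
    by (auto simp: vsub_def pA_def pB_def)
  have ta: "cosh \<theta>^2 - sinh \<theta>^2 = 1" "cosh \<psi>^2 - sinh \<psi>^2 = 1" "cosh \<alpha>^2 - sinh \<alpha>^2 = 1"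
    by (simp_all add: cosh_square_eq)
  define X where "X = a * cosh \<theta> + x * cosh \<alpha> + y * sinh \<alpha>"
  define Y where "Y = a * sinh \<theta> + x * sinh \<alpha> + y * cosh \<alpha>"
  have E1: "(-2*x*X + 2*y*Y) * cosh \<alpha> + (2*x*Y - 2*y*X) * sinh \<alpha> = a^2 - (X^2 - Y^2) - x^2 + y^2"
    unfolding X_def Y_def using ta by algebra
  have E2: "(-2*(x-h)*(X-g) + 2*y*Y) * cosh \<alpha> + (2*(x-h)*Y - 2*y*(X-g)) * sinh \<alpha>
      = b^2 - ((X-g)^2 - Y^2) - (x-h)^2 + y^2"
    unfolding X_def Y_def using ta v1 v2 by algebra
  have "FF a b g h x y X Y = 0"
    unfolding FF_def Let_def by (rule key[OF E1 E2 ta(3)])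
  then show "poly2_eval 6 (cc a b g h x y) (fst (coupler_pt a \<theta> \<alpha> x y)) (snd (coupler_pt a \<theta> \<alpha> x y)) = 0"
    by (simp add: eval_eq coupler_pt_def X_def Y_def)
qed

end
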